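(* Let $P$ be a conical refinement monoid containing order-ideals $I,I'$ with $I\cap I'=0$, and let $\varphi\colon I\to I'$ be a monoid isomorphism. Let $Q$ be the crowned pushout of $(P,I,I',\varphi)$. Then $Q=P/\!\sim$, where $\sim$ is the congruence on $P$ generated by $x+i\sim x+\varphi(i)$ for $i\in I$, $x\in P$, with the coequalizing map the canonical projection $\pi\colon P\to Q$. Moreover $Q$ is a conical refinement monoid, and $Q$ contains an order-ideal $Z$ isomorphic to $I$ such that $\pi$ induces an isomorphism $P/(I+I')\cong Q/Z$.
   Context: Monoids are abelian; conical means $x+y=0\Rightarrow x=y=0$; refinement monoid means every $x_1+x_2=y_1+y_2$ admits $x_{ij}$ with $x_i=x_{i1}+x_{i2}$, $y_j=x_{1j}+x_{2j}$. An order-ideal is a nonempty $I\subseteq P$ with $x+y\in I\iff x,y\in I$; $P/I$ denotes the quotient by $x\equiv y\iff x+u=y+v$ for some $u,v\in I$. The crowned pushout of $(P,I,I',\varphi)$ is the coequalizer, in the category of monoids, of the inclusion $I\to P$ and the composite $I\xrightarrow{\varphi}I'\hookrightarrow P$: a homomorphism $f\colon P\to Q$ with $f(x)=f(\varphi(x))$ for all $x\in I$, through which every homomorphism $g$ with $g(x)=g(\varphi(x))$ ($x\in I$) factors uniquely. *)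

theory Defs
  imports "HOL-Algebra.Algebra"
begin

text \<open>Abelian monoids are HOL-Algebra commutative monoids (written multiplicatively).\<close>

definition conical :: "('a,'b) monoid_scheme \<Rightarrow> bool" where
  "conical P \<longleftrightarrow> (\<forall>x\<in>carrier P. \<forall>y\<in>carrier P.
      x \<otimes>\<^bsub>P\<^esub> y = \<one>\<^bsub>P\<^esub> \<longrightarrow> x = \<one>\<^bsub>P\<^esub> \<and> y = \<one>\<^bsub>P\<^esub>)"

definition refinement_monoid :: "('a,'b) monoid_scheme \<Rightarrow> bool" where
  "refinement_monoid P \<longleftrightarrow> comm_monoid P \<and>
    (\<forall>x1\<in>carrier P. \<forall>x2\<in>carrier P. \<forall>y1\<in>carrier P. \<forall>y2\<in>carrier P.
      x1 \<otimes>\<^bsub>P\<^esub> x2 = y1 \<otimes>\<^bsub>P\<^esub> y2 \<longrightarrow>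
      (\<exists>x11\<in>carrier P. \<exists>x12\<in>carrier P. \<exists>x21\<in>carrier P. \<exists>x22\<in>carrier P.
         x1 = x11 \<otimes>\<^bsub>P\<^esub> x12 \<and> x2 = x21 \<otimes>\<^bsub>P\<^esub> x22 \<and>
         y1 = x11 \<otimes>\<^bsub>P\<^esub> x21 \<and> y2 = x12 \<otimes>\<^bsub>P\<^esub> x22))"

definition order_ideal :: "('a,'b) monoid_scheme \<Rightarrow> 'a set \<Rightarrow> bool" where
  "order_ideal P I \<longleftrightarrow> I \<subseteq> carrier P \<and> I \<noteq> {} \<and>
     (\<forall>x\<in>carrier P. \<forall>y\<in>carrier P. x \<otimes>\<^bsub>P\<^esub> y \<in> I \<longleftrightarrow> x \<in> I \<and> y \<in> I)"

definition mon_congruence :: "('a,'b) monoid_scheme \<Rightarrow> ('a \<times> 'a) set \<Rightarrow> bool" where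
  "mon_congruence P R \<longleftrightarrow> equiv (carrier P) R \<and>
     (\<forall>(a,b)\<in>R. \<forall>c\<in>carrier P. (a \<otimes>\<^bsub>P\<^esub> c, b \<otimes>\<^bsub>P\<^esub> c) \<in> R \<and> (c \<otimes>\<^bsub>P\<^esub> a, c \<otimes>\<^bsub>P\<^esub> b) \<in> R)"

definition gen_congruence :: "('a,'b) monoid_scheme \<Rightarrow> ('a \<times> 'a) set \<Rightarrow> ('a \<times> 'a) set" where
  "gen_congruence P S = \<Inter>{R. mon_congruence P R \<and> S \<subseteq> R}"

definition quot_monoid :: "('a,'b) monoid_scheme \<Rightarrow> ('a \<times> 'a) set \<Rightarrow> 'a set monoid" where
  "quot_monoid P R = \<lparr>carrier = carrier P // R,
     monoid.mult = (\<lambda>A B. \<Union>a\<in>A. \<Union>b\<in>B. R `` {a \<otimes>\<^bsub>P\<^esub> b}),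
     monoid.one = R `` {\<one>\<^bsub>P\<^esub>}\<rparr>"

definition ideal_rel :: "('a,'b) monoid_scheme \<Rightarrow> 'a set \<Rightarrow> ('a \<times> 'a) set" where
  "ideal_rel P I = {(x,y). x \<in> carrier P \<and> y \<in> carrier P \<and>
      (\<exists>u\<in>I. \<exists>v\<in>I. x \<otimes>\<^bsub>P\<^esub> u = y \<otimes>\<^bsub>P\<^esub> v)}"

definition ideal_quot :: "('a,'b) monoid_scheme \<Rightarrow> 'a set \<Rightarrow> 'a set monoid" where
  "ideal_quot P I = quot_monoid P (ideal_rel P I)"

definition set_sum :: "('a,'b) monoid_scheme \<Rightarrow> 'a set \<Rightarrow> 'a set \<Rightarrow> 'a set" where
  "set_sum P I J = {i \<otimes>\<^bsub>P\<^esub> j | i j. i \<in> I \<and> j \<in> J}"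

definition crown_rel :: "('a,'b) monoid_scheme \<Rightarrow> 'a set \<Rightarrow> ('a \<Rightarrow> 'a) \<Rightarrow> ('a \<times> 'a) set" where
  "crown_rel P I \<phi> = gen_congruence P
     {(x \<otimes>\<^bsub>P\<^esub> i, x \<otimes>\<^bsub>P\<^esub> \<phi> i) | x i. x \<in> carrier P \<and> i \<in> I}"

definition crown_quot :: "('a,'b) monoid_scheme \<Rightarrow> 'a set \<Rightarrow> ('a \<Rightarrow> 'a) \<Rightarrow> 'a set monoid" where
  "crown_quot P I \<phi> = quot_monoid P (crown_rel P I \<phi>)"

definition crown_proj :: "('a,'b) monoid_scheme \<Rightarrow> 'a set \<Rightarrow> ('a \<Rightarrow> 'a) \<Rightarrow> 'a \<Rightarrow> 'a set" where
  "crown_proj P I \<phi> = (\<lambda>x. crown_rel P I \<phi> `` {x})"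

text \<open>Crowned pushout (coequalizer of I -> P and I -> I' -> P in abelian monoids), with
  the universal property tested against all commutative monoids whose elements have type 'r.
  Used with a free type variable 'r in a conclusion, this gives the property for all types.\<close>

definition crowned_pushout ::
  "'r itself \<Rightarrow> ('a,'b) monoid_scheme \<Rightarrow> 'a set \<Rightarrow> 'a set \<Rightarrow> ('a \<Rightarrow> 'a)
     \<Rightarrow> ('q,'c) monoid_scheme \<Rightarrow> ('a \<Rightarrow> 'q) \<Rightarrow> bool" where
  "crowned_pushout T P I I' \<phi> Q f \<longleftrightarrow>
     \<phi> ` I \<subseteq> I' \<and> comm_monoid Q \<and> f \<in> hom P Q \<and> (\<forall>x\<in>I. f x = f (\<phi> x)) \<and>
     (\<forall>R :: 'r monoid. comm_monoid R \<longrightarrow>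
        (\<forall>g\<in>hom P R. (\<forall>x\<in>I. g x = g (\<phi> x)) \<longrightarrow>
           (\<exists>h\<in>hom Q R. (\<forall>x\<in>carrier P. h (f x) = g x) \<and>
              (\<forall>h'\<in>hom Q R. (\<forall>x\<in>carrier P. h' (f x) = g x) \<longrightarrow>
                 (\<forall>y\<in>carrier Q. h' y = h y)))))"

end

theory Submission imports Defs begin


lemma monc_equiv: "mon_congruence P R \<Longrightarrow> equiv (carrier P) R"
  by (simp add: mon_congruence_def)

lemma monc_mult:
  assumes "mon_congruence P R" "(a,b) \<in> R" "(c,d) \<in> R" "comm_monoid P"
  shows "(a \<otimes>\<^bsub>P\<^esub> c, b \<otimes>\<^bsub>P\<^esub> d) \<in> R"
proof -
  have e: "equiv (carrier P) R" using assms(1) by (simp add: mon_congruence_def)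
  have c: "a \<in> carrier P" "b \<in> carrier P" "c \<in> carrier P" "d \<in> carrier P"
    using assms e by (auto simp: equiv_def refl_on_def)
  have 1: "(a \<otimes>\<^bsub>P\<^esub> c, b \<otimes>\<^bsub>P\<^esub> c) \<in> R" using assms(1,2) c unfolding mon_congruence_def by blast
  have 2: "(b \<otimes>\<^bsub>P\<^esub> c, b \<otimes>\<^bsub>P\<^esub> d) \<in> R" using assms(1,3) c unfolding mon_congruence_def by blast
  show ?thesis using 1 2 e by (meson equiv_def transD)
qed

lemma quot_mult_class:
  assumes "comm_monoid P" "mon_congruence P R" "x \<in> carrier P" "y \<in> carrier P"
  shows "R``{x} \<otimes>\<^bsub>quot_monoid P R\<^esub> R``{y} = R``{x \<otimes>\<^bsub>P\<^esub> y}"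
proof -
  have e: "equiv (carrier P) R" using assms(2) by (simp add: mon_congruence_def)
  { fix a b assume a: "a \<in> R``{x}" and b: "b \<in> R``{y}"
    have "(x,a) \<in> R" "(y,b) \<in> R" using a b by (simp_all add: Image_singleton_iff)
    hence "(x \<otimes>\<^bsub>P\<^esub> y, a \<otimes>\<^bsub>P\<^esub> b) \<in> R" by (rule monc_mult[OF assms(2) _ _ assms(1)])
    hence "R``{a \<otimes>\<^bsub>P\<^esub> b} = R``{x \<otimes>\<^bsub>P\<^esub> y}" using e by (metis equiv_class_eq) }
  hence "\<And>a b. a \<in> R``{x} \<Longrightarrow> b \<in> R``{y} \<Longrightarrow> R``{a \<otimes>\<^bsub>P\<^esub> b} = R``{x \<otimes>\<^bsub>P\<^esub> y}" .
  note eq = this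
  have xx: "x \<in> R``{x}" "y \<in> R``{y}" using equiv_class_self[OF e assms(3)] equiv_class_self[OF e assms(4)] by auto
  have U: "(\<Union>a\<in>R``{x}. \<Union>b\<in>R``{y}. R``{a \<otimes>\<^bsub>P\<^esub> b}) = R``{x \<otimes>\<^bsub>P\<^esub> y}"
  proof (rule equalityI)
    show "(\<Union>a\<in>R``{x}. \<Union>b\<in>R``{y}. R``{a \<otimes>\<^bsub>P\<^esub> b}) \<subseteq> R``{x \<otimes>\<^bsub>P\<^esub> y}"
    proof (rule subsetI)
      fix z assume "z \<in> (\<Union>a\<in>R``{x}. \<Union>b\<in>R``{y}. R``{a \<otimes>\<^bsub>P\<^esub> b})"
      then obtain a b where "a \<in> R``{x}" "b \<in> R``{y}" "z \<in> R``{a \<otimes>\<^bsub>P\<^esub> b}"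
        unfolding UN_iff by blast
      thus "z \<in> R``{x \<otimes>\<^bsub>P\<^esub> y}" using eq by simp
    qed
    show "R``{x \<otimes>\<^bsub>P\<^esub> y} \<subseteq> (\<Union>a\<in>R``{x}. \<Union>b\<in>R``{y}. R``{a \<otimes>\<^bsub>P\<^esub> b})"
      using xx by blast
  qed
  show ?thesis by (simp only: quot_monoid_def monoid.select_convs U)
qed

lemma quot_carrier_iff:
  "A \<in> carrier (quot_monoid P R) \<longleftrightarrow> (\<exists>x\<in>carrier P. A = R``{x})"
  by (auto simp: quot_monoid_def quotient_def)

lemma quot_one: "\<one>\<^bsub>quot_monoid P R\<^esub> = R``{\<one>\<^bsub>P\<^esub>}"
  by (simp add: quot_monoid_def)

lemma quot_comm_monoid:
  assumes P: "comm_monoid P" and R: "mon_congruence P R"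
  shows "comm_monoid (quot_monoid P R)"
proof -
  interpret comm_monoid P by fact
  note mc = quot_mult_class[OF P R]
  show ?thesis
  proof (rule comm_monoidI)
    fix x y assume "x \<in> carrier (quot_monoid P R)" "y \<in> carrier (quot_monoid P R)"
    then obtain a b where "a \<in> carrier P" "b \<in> carrier P" "x = R``{a}" "y = R``{b}"
      by (auto simp: quot_carrier_iff)
    then show "x \<otimes>\<^bsub>quot_monoid P R\<^esub> y \<in> carrier (quot_monoid P R)"
      by (auto simp: mc quot_carrier_iff)
  next
    show "\<one>\<^bsub>quot_monoid P R\<^esub> \<in> carrier (quot_monoid P R)"
      by (auto simp: quot_carrier_iff quot_one)
  next
    fix x y z assume "x \<in> carrier (quot_monoid P R)" "y \<in> carrier (quot_monoid P R)" "z \<in> carrier (quot_monoid P R)"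
    then obtain a b c where "a \<in> carrier P" "b \<in> carrier P" "c \<in> carrier P" "x = R``{a}" "y = R``{b}" "z = R``{c}"
      by (auto simp: quot_carrier_iff)
    then show "x \<otimes>\<^bsub>quot_monoid P R\<^esub> y \<otimes>\<^bsub>quot_monoid P R\<^esub> z = x \<otimes>\<^bsub>quot_monoid P R\<^esub> (y \<otimes>\<^bsub>quot_monoid P R\<^esub> z)"
      by (simp add: mc m_assoc)
  next
    fix x assume "x \<in> carrier (quot_monoid P R)"
    then obtain a where "a \<in> carrier P" "x = R``{a}" by (auto simp: quot_carrier_iff)
    then show "\<one>\<^bsub>quot_monoid P R\<^esub> \<otimes>\<^bsub>quot_monoid P R\<^esub> x = x"
      by (simp add: mc quot_one)
  next
    fix x y assume "x \<in> carrier (quot_monoid P R)" "y \<in> carrier (quot_monoid P R)"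
    then obtain a b where "a \<in> carrier P" "b \<in> carrier P" "x = R``{a}" "y = R``{b}"
      by (auto simp: quot_carrier_iff)
    then show "x \<otimes>\<^bsub>quot_monoid P R\<^esub> y = y \<otimes>\<^bsub>quot_monoid P R\<^esub> x"
      by (simp add: mc m_comm)
  qed
qed

lemma quot_proj_hom:
  assumes "comm_monoid P" "mon_congruence P R"
  shows "(\<lambda>x. R``{x}) \<in> hom P (quot_monoid P R)"
  by (rule homI) (auto simp: quot_carrier_iff quot_mult_class[OF assms])

lemma quot_class_eq:
  assumes "mon_congruence P R" "x \<in> carrier P" "y \<in> carrier P"
  shows "R``{x} = R``{y} \<longleftrightarrow> (x,y) \<in> R"
proof -
  have "equiv (carrier P) R" using assms(1) by (simp add: mon_congruence_def)
  thus ?thesis using assms(2,3) equiv_class_eq_iff by metis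
qed

lemma ideal_rel_monc:
  fixes P (structure)
  assumes P: "comm_monoid P" and S: "S \<subseteq> carrier P" "\<one>\<^bsub>P\<^esub> \<in> S"
    "\<And>a b. a \<in> S \<Longrightarrow> b \<in> S \<Longrightarrow> a \<otimes>\<^bsub>P\<^esub> b \<in> S"
  shows "mon_congruence P (ideal_rel P S)"
proof -
  interpret comm_monoid P by fact
  have refl: "refl_on (carrier P) (ideal_rel P S)"
    unfolding refl_on_def ideal_rel_def using S by blast
  have sym: "sym (ideal_rel P S)"
    unfolding sym_def ideal_rel_def by (auto, metis)
  have trans: "trans (ideal_rel P S)"
  proof (rule transI)
    fix x y z assume "(x,y) \<in> ideal_rel P S" "(y,z) \<in> ideal_rel P S"
    then obtain u v u' v' where h: "x \<in> carrier P" "y \<in> carrier P" "z \<in> carrier P"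
      "u \<in> S" "v \<in> S" "u' \<in> S" "v' \<in> S" "x \<otimes> u = y \<otimes> v" "y \<otimes> u' = z \<otimes> v'"
      unfolding ideal_rel_def by auto
    have c: "u \<in> carrier P" "v \<in> carrier P" "u' \<in> carrier P" "v' \<in> carrier P" using h S by auto
    have "x \<otimes> (u \<otimes> u') = (x \<otimes> u) \<otimes> u'" using h(1) c by (metis m_assoc)
    also have "\<dots> = (y \<otimes> v) \<otimes> u'" using h by simp
    also have "\<dots> = (y \<otimes> u') \<otimes> v" using h(1,2,3) c by (simp add: m_ac)
    also have "\<dots> = (z \<otimes> v') \<otimes> v" using h by simp
    also have "\<dots> = z \<otimes> (v' \<otimes> v)" using h(3) c by (metis m_assoc)
    finally show "(x,z) \<in> ideal_rel P S" unfolding ideal_rel_def using h S by blast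
  qed
  have cong: "\<forall>(a,b)\<in>ideal_rel P S. \<forall>c\<in>carrier P. (a \<otimes> c, b \<otimes> c) \<in> ideal_rel P S \<and> (c \<otimes> a, c \<otimes> b) \<in> ideal_rel P S"
  proof (clarify)
    fix a b c assume ab: "(a,b) \<in> ideal_rel P S" and c: "c \<in> carrier P"
    then obtain u v where h: "a \<in> carrier P" "b \<in> carrier P" "u \<in> S" "v \<in> S" "a \<otimes> u = b \<otimes> v"
      unfolding ideal_rel_def by auto
    have cu: "u \<in> carrier P" "v \<in> carrier P" using h S by auto
    have "a \<otimes> c \<otimes> u = c \<otimes> (a \<otimes> u)" using h(1,2) c cu by (simp add: m_ac)
    also have "\<dots> = c \<otimes> (b \<otimes> v)" using h by simp
    also have "\<dots> = b \<otimes> c \<otimes> v" using h(1,2) c cu by (simp add: m_ac)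
    finally have 1: "a \<otimes> c \<otimes> u = b \<otimes> c \<otimes> v" .
    have "c \<otimes> a \<otimes> u = c \<otimes> (a \<otimes> u)" using h(1,2) c cu by (simp add: m_ac)
    also have "\<dots> = c \<otimes> (b \<otimes> v)" using h by simp
    also have "\<dots> = c \<otimes> b \<otimes> v" using h(1,2) c cu by (simp add: m_ac)
    finally have 2: "c \<otimes> a \<otimes> u = c \<otimes> b \<otimes> v" .
    show "(a \<otimes> c, b \<otimes> c) \<in> ideal_rel P S \<and> (c \<otimes> a, c \<otimes> b) \<in> ideal_rel P S"
      unfolding ideal_rel_def using h c 1 2 by auto
  qed
  have sub: "ideal_rel P S \<subseteq> carrier P \<times> carrier P" unfolding ideal_rel_def by auto
  show ?thesis unfolding mon_congruence_def using equivI[OF sub refl sym trans] cong by blast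
qed

lemma gen_cong_least:
  "mon_congruence P R \<Longrightarrow> S \<subseteq> R \<Longrightarrow> gen_congruence P S \<subseteq> R"
  unfolding gen_congruence_def by blast

lemma gen_cong_greatest:
  "(\<And>R. mon_congruence P R \<Longrightarrow> S \<subseteq> R \<Longrightarrow> R0 \<subseteq> R) \<Longrightarrow> R0 \<subseteq> gen_congruence P S"
  unfolding gen_congruence_def by blast



lemma order_idealD:
  assumes "order_ideal P I"
  shows "I \<subseteq> carrier P"
    "\<And>x y. x \<in> carrier P \<Longrightarrow> y \<in> carrier P \<Longrightarrow> x \<otimes>\<^bsub>P\<^esub> y \<in> I \<longleftrightarrow> x \<in> I \<and> y \<in> I"
  using assms unfolding order_ideal_def by auto

lemma order_ideal_one:
  assumes "order_ideal P I" "monoid P"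
  shows "\<one>\<^bsub>P\<^esub> \<in> I"
proof -
  obtain i where i: "i \<in> I" using assms unfolding order_ideal_def by auto
  have ic: "i \<in> carrier P" using i assms unfolding order_ideal_def by auto
  have "i \<otimes>\<^bsub>P\<^esub> \<one>\<^bsub>P\<^esub> \<in> I" using i ic assms(2) by (simp add: monoid.r_one)
  thus ?thesis using order_idealD(2)[OF assms(1) ic] assms(2) by (simp add: monoid.one_closed)
qed

locale crown = comm_monoid P for P (structure) +
  fixes I I' :: "'a set" and \<phi> :: "'a \<Rightarrow> 'a"
  assumes con: "conical P" and refm: "refinement_monoid P"
    and oI: "order_ideal P I" and oI': "order_ideal P I'" and int: "I \<inter> I' = {\<one>}"
    and iso: "\<phi> \<in> iso (P\<lparr>carrier := I\<rparr>) (P\<lparr>carrier := I'\<rparr>)"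
begin

lemma refine:
  assumes "x1 \<in> carrier P" "x2 \<in> carrier P" "y1 \<in> carrier P" "y2 \<in> carrier P" "x1 \<otimes> x2 = y1 \<otimes> y2"
  obtains a b c d where "a \<in> carrier P" "b \<in> carrier P" "c \<in> carrier P" "d \<in> carrier P"
    "x1 = a \<otimes> b" "x2 = c \<otimes> d" "y1 = a \<otimes> c" "y2 = b \<otimes> d"
proof -
  have "\<exists>a\<in>carrier P. \<exists>b\<in>carrier P. \<exists>c\<in>carrier P. \<exists>d\<in>carrier P.
    x1 = a \<otimes> b \<and> x2 = c \<otimes> d \<and> y1 = a \<otimes> c \<and> y2 = b \<otimes> d"
    using refm assms unfolding refinement_monoid_def by blast
  thus ?thesis using that by blast
qed

lemma I_sub: "I \<subseteq> carrier P" and I'_sub: "I' \<subseteq> carrier P"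
  using oI oI' order_idealD by auto

lemma I_iff: "x \<in> carrier P \<Longrightarrow> y \<in> carrier P \<Longrightarrow> x \<otimes> y \<in> I \<longleftrightarrow> x \<in> I \<and> y \<in> I"
  by (rule order_idealD(2)[OF oI])
lemma I'_iff: "x \<in> carrier P \<Longrightarrow> y \<in> carrier P \<Longrightarrow> x \<otimes> y \<in> I' \<longleftrightarrow> x \<in> I' \<and> y \<in> I'"
  by (rule order_idealD(2)[OF oI'])

lemma one_I: "\<one> \<in> I" and one_I': "\<one> \<in> I'"
  using order_ideal_one oI oI' monoid_axioms by auto

lemma I_c: "x \<in> I \<Longrightarrow> x \<in> carrier P" and I'_c: "x \<in> I' \<Longrightarrow> x \<in> carrier P"
  using I_sub I'_sub by auto

lemma phi_in: "x \<in> I \<Longrightarrow> \<phi> x \<in> I'"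
  and phi_mult: "x \<in> I \<Longrightarrow> y \<in> I \<Longrightarrow> \<phi> (x \<otimes> y) = \<phi> x \<otimes> \<phi> y"
  and phi_bij: "bij_betw \<phi> I I'"
  using iso unfolding iso_def hom_def by auto

lemma phi_one: "\<phi> \<one> = \<one>"
proof -
  obtain j where j: "j \<in> I" "\<phi> j = \<one>" using phi_bij one_I' unfolding bij_betw_def by (metis imageE)
  have "\<phi> \<one> = \<phi> \<one> \<otimes> \<one>" using phi_in[OF one_I] I'_c by simp
  also have "\<dots> = \<phi> (\<one> \<otimes> j)" using phi_mult[OF one_I j(1)] j by simp
  also have "\<dots> = \<one>" using j I_c by simp
  finally show ?thesis .
qed

definition tau where "tau = inv_into I \<phi>"

lemma tau_in: "x \<in> I' \<Longrightarrow> tau x \<in> I"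
  and phi_tau: "x \<in> I' \<Longrightarrow> \<phi> (tau x) = x"
  and tau_phi: "x \<in> I \<Longrightarrow> tau (\<phi> x) = x"
  unfolding tau_def using phi_bij
  by (auto simp: bij_betw_inv_into_left bij_betw_inv_into_right bij_betw_def inv_into_into)

lemma tau_mult: "x \<in> I' \<Longrightarrow> y \<in> I' \<Longrightarrow> tau (x \<otimes> y) = tau x \<otimes> tau y"
proof -
  assume x: "x \<in> I'" and y: "y \<in> I'"
  have xy: "x \<otimes> y \<in> I'" using x y I'_iff I'_c by auto
  have a: "tau x \<otimes> tau y \<in> I" using tau_in x y I_iff I_c by auto
  have "\<phi> (tau x \<otimes> tau y) = x \<otimes> y" using phi_mult tau_in phi_tau x y by simp
  hence "tau (\<phi> (tau x \<otimes> tau y)) = tau (x \<otimes> y)" by simp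
  thus ?thesis using tau_phi a by simp
qed

lemma tau_one: "tau \<one> = \<one>"
  using tau_phi[OF one_I] phi_one by simp

lemma uniq:
  assumes "a \<in> I" "b \<in> I" "a' \<in> I'" "b' \<in> I'" "a \<otimes> a' = b \<otimes> b'"
  shows "a = b \<and> a' = b'"
proof -
  obtain c11 c12 c21 c22 where c: "c11 \<in> carrier P" "c12 \<in> carrier P" "c21 \<in> carrier P" "c22 \<in> carrier P"
    "a = c11 \<otimes> c12" "a' = c21 \<otimes> c22" "b = c11 \<otimes> c21" "b' = c12 \<otimes> c22"
    by (rule refine[OF I_c[OF assms(1)] I'_c[OF assms(3)] I_c[OF assms(2)] I'_c[OF assms(4)] assms(5)])
  have "c12 \<in> I" "c12 \<in> I'" "c21 \<in> I" "c21 \<in> I'"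
    using assms c I_iff I'_iff by auto
  hence "c12 = \<one>" "c21 = \<one>" using int by auto
  thus ?thesis using c by simp
qed

definition S where "S = {a \<otimes> a' | a a'. a \<in> I \<and> a' \<in> I'}"

definition val where "val u = (THE v. \<exists>a a'. a \<in> I \<and> a' \<in> I' \<and> u = a \<otimes> a' \<and> v = a \<otimes> tau a')"

lemma val_eq: "a \<in> I \<Longrightarrow> a' \<in> I' \<Longrightarrow> val (a \<otimes> a') = a \<otimes> tau a'"
  unfolding val_def
  apply (rule the_equality)
   apply blast
  using uniq by blast

lemma SE: "u \<in> S \<Longrightarrow> (\<And>a a'. a \<in> I \<Longrightarrow> a' \<in> I' \<Longrightarrow> u = a \<otimes> a' \<Longrightarrow> thesis) \<Longrightarrow> thesis"
  unfolding S_def by blast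

lemma S_c: "u \<in> S \<Longrightarrow> u \<in> carrier P"
  by (erule SE) (auto simp: I_c I'_c)

lemma val_I: "u \<in> S \<Longrightarrow> val u \<in> I"
  by (erule SE) (auto simp: val_eq I_iff tau_in I_c)

lemma val_c: "u \<in> S \<Longrightarrow> val u \<in> carrier P"
  using val_I I_c by blast

lemma S_mult: assumes "u \<in> S" "v \<in> S"
  shows "u \<otimes> v \<in> S \<and> val (u \<otimes> v) = val u \<otimes> val v"
proof -
  obtain a a' where h1: "a \<in> I" "a' \<in> I'" "u = a \<otimes> a'"
    using assms(1) by (rule SE)
  obtain b b' where h2: "b \<in> I" "b' \<in> I'" "v = b \<otimes> b'"
    using assms(2) by (rule SE)
  note h = h1 h2
  have e: "u \<otimes> v = (a \<otimes> b) \<otimes> (a' \<otimes> b')" using h I_c I'_c by (simp add: m_ac)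
  have ab: "a \<otimes> b \<in> I" "a' \<otimes> b' \<in> I'" using h I_iff I'_iff I_c I'_c by auto
  have "u \<otimes> v \<in> S" using e ab unfolding S_def by blast
  moreover have "val (u \<otimes> v) = val u \<otimes> val v"
  proof -
    have "val (u \<otimes> v) = (a \<otimes> b) \<otimes> tau (a' \<otimes> b')" using e val_eq[OF ab] by simp
    also have "\<dots> = (a \<otimes> b) \<otimes> (tau a' \<otimes> tau b')" using tau_mult h by simp
    also have "\<dots> = (a \<otimes> tau a') \<otimes> (b \<otimes> tau b')" using h tau_in I_c by (simp add: m_ac)
    also have "\<dots> = val u \<otimes> val v" using h val_eq by simp
    finally show ?thesis .
  qed
  ultimately show ?thesis by blast
qed

lemma I_S: "i \<in> I \<Longrightarrow> i \<in> S \<and> val i = i"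
proof -
  assume i: "i \<in> I"
  have e: "i = i \<otimes> \<one>" using i I_c by simp
  have "i \<in> S" unfolding S_def using e i one_I' by blast
  moreover have "val i = i" using val_eq[OF i one_I'] tau_one e by simp
  ultimately show ?thesis by blast
qed

lemma I'_S: "i \<in> I' \<Longrightarrow> i \<in> S \<and> val i = tau i"
proof -
  assume i: "i \<in> I'"
  have e: "i = \<one> \<otimes> i" using i I'_c by simp
  have "i \<in> S" unfolding S_def using e i one_I by blast
  moreover have "val i = tau i" using val_eq[OF one_I i] tau_in[OF i] I_c e by simp
  ultimately show ?thesis by blast
qed

lemma S_one: "\<one> \<in> S" "val \<one> = \<one>" using I_S one_I by auto

lemma S_down: assumes "u \<in> carrier P" "w \<in> carrier P" "u \<otimes> w \<in> S"
  shows "u \<in> S" "w \<in> S"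
proof -
  obtain a a' where h: "a \<in> I" "a' \<in> I'" "u \<otimes> w = a \<otimes> a'" using assms(3) by (rule SE)
  obtain c11 c12 c21 c22 where c: "c11 \<in> carrier P" "c12 \<in> carrier P" "c21 \<in> carrier P" "c22 \<in> carrier P"
    "u = c11 \<otimes> c12" "w = c21 \<otimes> c22" "a = c11 \<otimes> c21" "a' = c12 \<otimes> c22"
    by (rule refine[OF assms(1) assms(2) I_c[OF h(1)] I'_c[OF h(2)] h(3)])
  have "c11 \<in> I" "c21 \<in> I" "c12 \<in> I'" "c22 \<in> I'" using c h I_iff I'_iff by auto
  thus "u \<in> S" "w \<in> S" using c unfolding S_def by auto
qed

lemma split:
  assumes v: "v \<in> S" and s: "s1 \<in> I" "s2 \<in> I" "val v = s1 \<otimes> s2"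
  obtains v1 v2 where "v1 \<in> S" "v2 \<in> S" "v = v1 \<otimes> v2" "val v1 = s1" "val v2 = s2"
proof -
  obtain b b' where h: "b \<in> I" "b' \<in> I'" "v = b \<otimes> b'" using v by (rule SE)
  have tb: "tau b' \<in> I" using tau_in h by simp
  have eq: "b \<otimes> tau b' = s1 \<otimes> s2" using s h val_eq by simp
  obtain c11 c12 c21 c22 where c: "c11 \<in> carrier P" "c12 \<in> carrier P" "c21 \<in> carrier P" "c22 \<in> carrier P"
    "b = c11 \<otimes> c12" "tau b' = c21 \<otimes> c22" "s1 = c11 \<otimes> c21" "s2 = c12 \<otimes> c22"
    by (rule refine[OF I_c[OF h(1)] I_c[OF tb] I_c[OF s(1)] I_c[OF s(2)] eq])
  have cI: "c11 \<in> I" "c12 \<in> I" "c21 \<in> I" "c22 \<in> I" using c h tb I_iff by auto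
  have b': "b' = \<phi> c21 \<otimes> \<phi> c22" using phi_tau[OF h(2)] c(6) phi_mult[OF cI(3,4)] by simp
  define v1 where "v1 = c11 \<otimes> \<phi> c21"
  define v2 where "v2 = c12 \<otimes> \<phi> c22"
  have pc: "\<phi> c21 \<in> I'" "\<phi> c22 \<in> I'" using phi_in cI by auto
  have 1: "v1 \<in> S" "v2 \<in> S" unfolding v1_def v2_def S_def using cI pc by auto
  have 2: "v = v1 \<otimes> v2" unfolding v1_def v2_def using h b' c cI pc I_c I'_c by (simp add: m_ac)
  have 3: "val v1 = s1" "val v2 = s2" unfolding v1_def v2_def
    using val_eq cI pc tau_phi c by auto
  show ?thesis using 1 2 3 that by blast
qed

definition R0 where "R0 = {(x,y). x \<in> carrier P \<and> y \<in> carrier P \<and>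
   (\<exists>p\<in>carrier P. \<exists>u\<in>S. \<exists>v\<in>S. x = p \<otimes> u \<and> y = p \<otimes> v \<and> val u = val v)}"

lemma R0I: "p \<in> carrier P \<Longrightarrow> u \<in> S \<Longrightarrow> v \<in> S \<Longrightarrow> val u = val v \<Longrightarrow> (p \<otimes> u, p \<otimes> v) \<in> R0"
  unfolding R0_def using S_c by blast

lemma R0E: "(x,y) \<in> R0 \<Longrightarrow> (\<And>p u v. p \<in> carrier P \<Longrightarrow> u \<in> S \<Longrightarrow> v \<in> S \<Longrightarrow> val u = val v \<Longrightarrow>
   x = p \<otimes> u \<Longrightarrow> y = p \<otimes> v \<Longrightarrow> thesis) \<Longrightarrow> thesis"
  unfolding R0_def by blast

lemma R0_c: "(x,y) \<in> R0 \<Longrightarrow> x \<in> carrier P \<and> y \<in> carrier P"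
  unfolding R0_def by blast

lemma R0_refl: "x \<in> carrier P \<Longrightarrow> (x,x) \<in> R0"
  using R0I[OF _ S_one(1) S_one(1)] by simp

lemma R0_sym: "(x,y) \<in> R0 \<Longrightarrow> (y,x) \<in> R0"
  by (erule R0E) (auto intro!: R0I)

lemma R0_trans: assumes "(x,y) \<in> R0" "(y,z) \<in> R0" shows "(x,z) \<in> R0"
proof -
  obtain p u v where 1: "p \<in> carrier P" "u \<in> S" "v \<in> S" "val u = val v" "x = p \<otimes> u" "y = p \<otimes> v"
    using assms(1) by (rule R0E)
  obtain q w t where 2: "q \<in> carrier P" "w \<in> S" "t \<in> S" "val w = val t" "y = q \<otimes> w" "z = q \<otimes> t"
    using assms(2) by (rule R0E)
  have pv: "p \<otimes> v = q \<otimes> w" using 1(6) 2(5) by simp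
  obtain r11 r12 r21 r22 where r: "r11 \<in> carrier P" "r12 \<in> carrier P" "r21 \<in> carrier P" "r22 \<in> carrier P"
    "p = r11 \<otimes> r12" "v = r21 \<otimes> r22" "q = r11 \<otimes> r21" "w = r12 \<otimes> r22"
    by (rule refine[OF 1(1) S_c[OF 1(3)] 2(1) S_c[OF 2(2)] pv])
  have v': "r21 \<otimes> r22 \<in> S" using r(6) 1(3) by simp
  have w': "r12 \<otimes> r22 \<in> S" using r(8) 2(2) by simp
  have rs: "r21 \<in> S" "r22 \<in> S" "r12 \<in> S" using S_down[OF r(3) r(4) v'] S_down[OF r(2) r(4) w'] by auto
  have x: "x = r11 \<otimes> (r12 \<otimes> u)" using 1(5) r(5) r(1,2) S_c[OF 1(2)] by (simp add: m_assoc)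
  have z: "z = r11 \<otimes> (r21 \<otimes> t)" using 2(6) r(7) r(1,3) S_c[OF 2(3)] by (simp add: m_assoc)
  have s1: "r12 \<otimes> u \<in> S" "r21 \<otimes> t \<in> S" using S_mult[OF rs(3) 1(2)] S_mult[OF rs(1) 2(3)] by auto
  have vv: "val v = val r21 \<otimes> val r22" using r(6) S_mult[OF rs(1) rs(2)] by simp
  have ww: "val w = val r12 \<otimes> val r22" using r(8) S_mult[OF rs(3) rs(2)] by simp
  have "val (r12 \<otimes> u) = val r12 \<otimes> (val r21 \<otimes> val r22)"
    using S_mult[OF rs(3) 1(2)] 1(4) vv by simp
  also have "\<dots> = val r21 \<otimes> (val r12 \<otimes> val r22)" using val_c rs by (simp add: m_ac)
  also have "\<dots> = val (r21 \<otimes> t)" using S_mult[OF rs(1) 2(3)] 2(4) ww by simp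
  finally show ?thesis using R0I[OF r(1) s1] x z by simp
qed

lemma R0_monc: "mon_congruence P R0"
proof -
  have "equiv (carrier P) R0"
    apply (rule equivI)
    subgoal using R0_c by auto
    subgoal unfolding refl_on_def using R0_refl by blast
    subgoal unfolding sym_def using R0_sym by blast
    subgoal unfolding trans_def using R0_trans by blast
    done
  moreover have "\<forall>(a,b)\<in>R0. \<forall>c\<in>carrier P. (a \<otimes> c, b \<otimes> c) \<in> R0 \<and> (c \<otimes> a, c \<otimes> b) \<in> R0"
  proof (clarify)
    fix a b c assume ab: "(a,b) \<in> R0" and c: "c \<in> carrier P"
    obtain p u v where 1: "p \<in> carrier P" "u \<in> S" "v \<in> S" "val u = val v" "a = p \<otimes> u" "b = p \<otimes> v"
      using ab by (rule R0E)
    have "a \<otimes> c = (p \<otimes> c) \<otimes> u" "b \<otimes> c = (p \<otimes> c) \<otimes> v" "c \<otimes> a = (c \<otimes> p) \<otimes> u" "c \<otimes> b = (c \<otimes> p) \<otimes> v"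
      using 1 c S_c by (simp_all add: m_ac)
    thus "(a \<otimes> c, b \<otimes> c) \<in> R0 \<and> (c \<otimes> a, c \<otimes> b) \<in> R0"
      using R0I 1 c by simp
  qed
  ultimately show ?thesis unfolding mon_congruence_def by blast
qed

definition Gens where "Gens = {(x \<otimes> i, x \<otimes> \<phi> i) | x i. x \<in> carrier P \<and> i \<in> I}"

lemma Gens_R0: "Gens \<subseteq> R0"
proof clarify
  fix a b assume "(a,b) \<in> Gens"
  then obtain x i where h: "x \<in> carrier P" "i \<in> I" "a = x \<otimes> i" "b = x \<otimes> \<phi> i" unfolding Gens_def by blast
  have "val (\<phi> i) = i" using I'_S phi_in tau_phi h by simp
  thus "(a,b) \<in> R0" using R0I[OF h(1)] I_S I'_S phi_in h by simp
qed

lemma R0_least: assumes R: "mon_congruence P R" "Gens \<subseteq> R" shows "R0 \<subseteq> R"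
proof -
  have e: "equiv (carrier P) R" using R by (simp add: mon_congruence_def)
  have t: "\<And>x y z. (x,y) \<in> R \<Longrightarrow> (y,z) \<in> R \<Longrightarrow> (x,z) \<in> R" using e by (meson equiv_def transD)
  have s: "\<And>x y. (x,y) \<in> R \<Longrightarrow> (y,x) \<in> R" using e by (meson equiv_def symD)
  have rf: "\<And>x. x \<in> carrier P \<Longrightarrow> (x,x) \<in> R" using e by (meson equiv_def refl_onD)
  have g: "\<And>a'. a' \<in> I' \<Longrightarrow> (a', tau a') \<in> R"
  proof -
    fix a' assume a': "a' \<in> I'"
    have "(\<one> \<otimes> tau a', \<one> \<otimes> \<phi> (tau a')) \<in> Gens" unfolding Gens_def using tau_in a' by blast
    hence "(tau a', a') \<in> R" using R tau_in a' phi_tau I_c I'_c by auto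
    thus "(a', tau a') \<in> R" by (rule s)
  qed
  have uv: "\<And>u. u \<in> S \<Longrightarrow> (u, val u) \<in> R"
  proof -
    fix u assume "u \<in> S"
    then obtain a a' where h: "a \<in> I" "a' \<in> I'" "u = a \<otimes> a'" by (rule SE)
    have "(a \<otimes> a', a \<otimes> tau a') \<in> R" using monc_mult[OF R(1) rf g] h I_c comm_monoid_axioms by blast
    thus "(u, val u) \<in> R" using h val_eq by simp
  qed
  show ?thesis
  proof clarify
    fix x y assume "(x,y) \<in> R0"
    then obtain p u v where 1: "p \<in> carrier P" "u \<in> S" "v \<in> S" "val u = val v" "x = p \<otimes> u" "y = p \<otimes> v"
      by (rule R0E)
    have a: "(p \<otimes> u, p \<otimes> val u) \<in> R" using monc_mult[OF R(1) rf uv] 1 comm_monoid_axioms by blast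
    have b: "(p \<otimes> v, p \<otimes> val v) \<in> R" using monc_mult[OF R(1) rf uv] 1 comm_monoid_axioms by blast
    have b': "(p \<otimes> val u, p \<otimes> v) \<in> R" using s[OF b] 1(4) by simp
    show "(x,y) \<in> R" using t[OF a b'] 1(5,6) by simp
  qed
qed

lemma crown_rel_eq: "crown_rel P I \<phi> = R0"
proof
  have "Gens \<subseteq> carrier P \<times> carrier P" unfolding Gens_def using phi_in I_c I'_c by auto
  show "crown_rel P I \<phi> \<subseteq> R0" unfolding crown_rel_def
    using gen_cong_least[OF R0_monc Gens_R0] unfolding Gens_def by simp
  show "R0 \<subseteq> crown_rel P I \<phi>" unfolding crown_rel_def
    apply (rule gen_cong_greatest)
    using R0_least unfolding Gens_def by blast
qed

end


lemma ideal_relI: "x \<in> carrier M \<Longrightarrow> y \<in> carrier M \<Longrightarrow> u \<in> J \<Longrightarrow> v \<in> J \<Longrightarrow>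
  x \<otimes>\<^bsub>M\<^esub> u = y \<otimes>\<^bsub>M\<^esub> v \<Longrightarrow> (x,y) \<in> ideal_rel M J"
  unfolding ideal_rel_def by blast

lemma ideal_relE: "(x,y) \<in> ideal_rel M J \<Longrightarrow>
  (\<And>u v. u \<in> J \<Longrightarrow> v \<in> J \<Longrightarrow> x \<otimes>\<^bsub>M\<^esub> u = y \<otimes>\<^bsub>M\<^esub> v \<Longrightarrow> thesis) \<Longrightarrow> thesis"
  unfolding ideal_rel_def by blast

lemma quot_cases: "A \<in> carrier (quot_monoid M R) \<Longrightarrow> (\<And>x. x \<in> carrier M \<Longrightarrow> A = R``{x} \<Longrightarrow> thesis) \<Longrightarrow> thesis"
  using quot_carrier_iff by metis

lemma quot_classI: "x \<in> carrier M \<Longrightarrow> R``{x} \<in> carrier (quot_monoid M R)"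
  using quot_carrier_iff by metis

lemma monc_sym: "mon_congruence M R \<Longrightarrow> (x,y) \<in> R \<Longrightarrow> (y,x) \<in> R"
  unfolding mon_congruence_def equiv_def sym_def by blast

lemma monc_c: "mon_congruence M R \<Longrightarrow> (x,y) \<in> R \<Longrightarrow> x \<in> carrier M \<and> y \<in> carrier M"
  unfolding mon_congruence_def equiv_def by blast

context crown begin

abbreviation "Qm \<equiv> quot_monoid P R0"
abbreviation "prj x \<equiv> R0``{x}"

lemma Q_cm: "comm_monoid Qm"
  by (rule quot_comm_monoid[OF comm_monoid_axioms R0_monc])

lemma pi_mult: "x \<in> carrier P \<Longrightarrow> y \<in> carrier P \<Longrightarrow> prj x \<otimes>\<^bsub>Qm\<^esub> prj y = prj (x \<otimes> y)"
  by (rule quot_mult_class[OF comm_monoid_axioms R0_monc])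

lemma pi_eq: "x \<in> carrier P \<Longrightarrow> y \<in> carrier P \<Longrightarrow> prj x = prj y \<longleftrightarrow> (x,y) \<in> R0"
  by (rule quot_class_eq[OF R0_monc])

lemma Q_carrier: "A \<in> carrier Qm \<longleftrightarrow> (\<exists>x\<in>carrier P. A = prj x)"
  by (rule quot_carrier_iff)

lemma pi_c: "x \<in> carrier P \<Longrightarrow> prj x \<in> carrier Qm"
  using Q_carrier by metis

lemma Q_one: "\<one>\<^bsub>Qm\<^esub> = prj \<one>"
  by (rule quot_one)

lemma Q_cases: "A \<in> carrier Qm \<Longrightarrow> (\<And>x. x \<in> carrier P \<Longrightarrow> A = prj x \<Longrightarrow> thesis) \<Longrightarrow> thesis"
  using Q_carrier by metis

lemma lift:
  assumes x: "x1 \<in> carrier P" "x2 \<in> carrier P" and r: "(x1 \<otimes> x2, y) \<in> R0"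
  obtains z1 z2 where "z1 \<in> carrier P" "z2 \<in> carrier P" "(x1,z1) \<in> R0" "(x2,z2) \<in> R0" "z1 \<otimes> z2 = y"
proof -
  obtain p u v where 1: "p \<in> carrier P" "u \<in> S" "v \<in> S" "val u = val v" "x1 \<otimes> x2 = p \<otimes> u" "y = p \<otimes> v"
    using r by (rule R0E)
  obtain p1 e1 p2 e2 where 2: "p1 \<in> carrier P" "e1 \<in> carrier P" "p2 \<in> carrier P" "e2 \<in> carrier P"
    "x1 = p1 \<otimes> e1" "x2 = p2 \<otimes> e2" "p = p1 \<otimes> p2" "u = e1 \<otimes> e2"
    by (rule refine[OF x(1) x(2) 1(1) S_c[OF 1(2)] 1(5)])
  have ue: "e1 \<otimes> e2 \<in> S" using 2(8) 1(2) by simp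
  have es: "e1 \<in> S" "e2 \<in> S" using S_down[OF 2(2) 2(4) ue] by auto
  have vv: "val v = val e1 \<otimes> val e2" using 1(4) 2(8) S_mult[OF es] by simp
  obtain v1 v2 where 3: "v1 \<in> S" "v2 \<in> S" "v = v1 \<otimes> v2" "val v1 = val e1" "val v2 = val e2"
    by (rule split[OF 1(3) val_I[OF es(1)] val_I[OF es(2)] vv])
  have a: "(x1, p1 \<otimes> v1) \<in> R0" using R0I[OF 2(1) es(1) 3(1)] 2(5) 3(4) by simp
  have b: "(x2, p2 \<otimes> v2) \<in> R0" using R0I[OF 2(3) es(2) 3(2)] 2(6) 3(5) by simp
  have c: "(p1 \<otimes> v1) \<otimes> (p2 \<otimes> v2) = y" using 1(6) 2(7) 3(3) 2(1,3) 3(1,2) S_c by (simp add: m_ac)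
  show ?thesis using that[OF _ _ a b c] 2(1,3) 3(1,2) S_c by simp
qed

lemma Q_refinement: "refinement_monoid Qm"
  unfolding refinement_monoid_def
proof (intro conjI Q_cm ballI impI)
  fix X1 X2 Y1 Y2 assume AA: "X1 \<in> carrier Qm" "X2 \<in> carrier Qm" "Y1 \<in> carrier Qm" "Y2 \<in> carrier Qm"
    and eq: "X1 \<otimes>\<^bsub>Qm\<^esub> X2 = Y1 \<otimes>\<^bsub>Qm\<^esub> Y2"
  obtain x1 where x1: "x1 \<in> carrier P" "X1 = prj x1" using AA(1) by (rule Q_cases)
  obtain x2 where x2: "x2 \<in> carrier P" "X2 = prj x2" using AA(2) by (rule Q_cases)
  obtain y1 where y1: "y1 \<in> carrier P" "Y1 = prj y1" using AA(3) by (rule Q_cases)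
  obtain y2 where y2: "y2 \<in> carrier P" "Y2 = prj y2" using AA(4) by (rule Q_cases)
  have "prj (x1 \<otimes> x2) = prj (y1 \<otimes> y2)" using eq x1 x2 y1 y2 pi_mult by simp
  hence r: "(x1 \<otimes> x2, y1 \<otimes> y2) \<in> R0" using pi_eq x1 x2 y1 y2 by simp
  obtain z1 z2 where z: "z1 \<in> carrier P" "z2 \<in> carrier P" "(x1,z1) \<in> R0" "(x2,z2) \<in> R0" "z1 \<otimes> z2 = y1 \<otimes> y2"
    by (rule lift[OF x1(1) x2(1) r])
  obtain a b c d where 2: "a \<in> carrier P" "b \<in> carrier P" "c \<in> carrier P" "d \<in> carrier P"
    "z1 = a \<otimes> b" "z2 = c \<otimes> d" "y1 = a \<otimes> c" "y2 = b \<otimes> d"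
    by (rule refine[OF z(1) z(2) y1(1) y2(1) z(5)])
  have "X1 = prj a \<otimes>\<^bsub>Qm\<^esub> prj b" using x1 z 2 pi_eq pi_mult by simp
  moreover have "X2 = prj c \<otimes>\<^bsub>Qm\<^esub> prj d" using x2 z 2 pi_eq pi_mult by simp
  moreover have "Y1 = prj a \<otimes>\<^bsub>Qm\<^esub> prj c" using y1 2 pi_mult by simp
  moreover have "Y2 = prj b \<otimes>\<^bsub>Qm\<^esub> prj d" using y2 2 pi_mult by simp
  ultimately show "\<exists>x11\<in>carrier Qm. \<exists>x12\<in>carrier Qm. \<exists>x21\<in>carrier Qm. \<exists>x22\<in>carrier Qm.
         X1 = x11 \<otimes>\<^bsub>Qm\<^esub> x12 \<and> X2 = x21 \<otimes>\<^bsub>Qm\<^esub> x22 \<and> Y1 = x11 \<otimes>\<^bsub>Qm\<^esub> x21 \<and> Y2 = x12 \<otimes>\<^bsub>Qm\<^esub> x22"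
    using pi_c 2 by blast
qed

lemma conD: "x \<in> carrier P \<Longrightarrow> y \<in> carrier P \<Longrightarrow> x \<otimes> y = \<one> \<Longrightarrow> x = \<one> \<and> y = \<one>"
  using con unfolding conical_def by blast

lemma Q_conical: "conical Qm"
  unfolding conical_def
proof (intro ballI impI)
  fix AA BB assume AA: "AA \<in> carrier Qm" "BB \<in> carrier Qm" and eq: "AA \<otimes>\<^bsub>Qm\<^esub> BB = \<one>\<^bsub>Qm\<^esub>"
  obtain x where x: "x \<in> carrier P" "AA = prj x" using AA(1) by (rule Q_cases)
  obtain y where y: "y \<in> carrier P" "BB = prj y" using AA(2) by (rule Q_cases)
  have "prj (x \<otimes> y) = prj \<one>" using eq x y pi_mult Q_one by simp
  hence r: "(x \<otimes> y, \<one>) \<in> R0" using pi_eq x y by simp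
  obtain p u v where 1: "p \<in> carrier P" "u \<in> S" "v \<in> S" "val u = val v" "x \<otimes> y = p \<otimes> u" "\<one> = p \<otimes> v"
    using r by (rule R0E)
  have pv: "p = \<one>" "v = \<one>" using conD[OF 1(1) S_c[OF 1(3)] 1(6)[symmetric]] by auto
  have vu: "val u = \<one>" using 1(4) pv S_one by simp
  obtain a a' where h: "a \<in> I" "a' \<in> I'" "u = a \<otimes> a'" using 1(2) by (rule SE)
  have "a \<otimes> tau a' = \<one>" using vu h val_eq by simp
  hence "a = \<one>" "tau a' = \<one>" using conD I_c tau_in h by auto
  hence a1: "a' = \<one>" using phi_tau[OF h(2)] phi_one by simp
  have "x \<otimes> y = \<one>" using 1(5) pv(1) h(3) \<open>a = \<one>\<close> a1 by simp
  hence "x = \<one> \<and> y = \<one>" by (rule conD[OF x(1) y(1)])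
  hence "x = \<one>" "y = \<one>" by auto
  thus "AA = \<one>\<^bsub>Qm\<^esub> \<and> BB = \<one>\<^bsub>Qm\<^esub>" using x y Q_one by simp
qed

lemma S_R0: "s \<in> S \<Longrightarrow> (s, val s) \<in> R0"
  using R0I[OF one_closed, of s "val s"] I_S val_I S_c val_c by simp

abbreviation "Z \<equiv> prj ` I"

lemma Z_ideal: "order_ideal Qm Z"
  unfolding order_ideal_def
proof (intro conjI ballI)
  show "Z \<subseteq> carrier Qm" using pi_c I_c by blast
  show "Z \<noteq> {}" using one_I by blast
  fix AA BB assume AA: "AA \<in> carrier Qm" "BB \<in> carrier Qm"
  obtain x where x: "x \<in> carrier P" "AA = prj x" using AA(1) by (rule Q_cases)
  obtain y where y: "y \<in> carrier P" "BB = prj y" using AA(2) by (rule Q_cases)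
  show "AA \<otimes>\<^bsub>Qm\<^esub> BB \<in> Z \<longleftrightarrow> AA \<in> Z \<and> BB \<in> Z"
  proof
    assume AB: "AA \<otimes>\<^bsub>Qm\<^esub> BB \<in> Z"
    have e: "AA \<otimes>\<^bsub>Qm\<^esub> BB = prj (x \<otimes> y)" unfolding x(2) y(2) by (rule pi_mult[OF x(1) y(1)])
    have "prj (x \<otimes> y) \<in> Z" using AB unfolding e .
    then obtain i where i': "prj (x \<otimes> y) = prj i" "i \<in> I" by (rule imageE)
    note i = i'(2) i'(1)
    hence r: "(x \<otimes> y, i) \<in> R0" using pi_eq[OF m_closed[OF x(1) y(1)] I_c[OF i(1)]] by simp
    obtain p u v where 1: "p \<in> carrier P" "u \<in> S" "v \<in> S" "val u = val v" "x \<otimes> y = p \<otimes> u" "i = p \<otimes> v"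
      using r by (rule R0E)
    have "p \<in> I" using I_iff[OF 1(1) S_c[OF 1(3)]] 1(6) i(1) by simp
    hence pS: "p \<in> S" using I_S by simp
    have "x \<otimes> y \<in> S" using S_mult[OF pS 1(2)] 1(5) by simp
    hence s: "x \<in> S" "y \<in> S" using S_down[OF x(1) y(1)] by auto
    have ax: "AA = prj (val x)" using x(2) pi_eq[OF x(1) val_c[OF s(1)]] S_R0[OF s(1)] by simp
    have by': "BB = prj (val y)" using y(2) pi_eq[OF y(1) val_c[OF s(2)]] S_R0[OF s(2)] by simp
    have "AA \<in> Z" by (rule rev_image_eqI[OF val_I[OF s(1)]]) (rule ax)
    moreover have "BB \<in> Z" by (rule rev_image_eqI[OF val_I[OF s(2)]]) (rule by')
    ultimately show "AA \<in> Z \<and> BB \<in> Z" by (rule conjI)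
  next
    assume "AA \<in> Z \<and> BB \<in> Z"
    hence "AA \<in> Z" "BB \<in> Z" by auto
    obtain i where i: "AA = prj i" "i \<in> I" using \<open>AA \<in> Z\<close> by (rule imageE)
    obtain j where j: "BB = prj j" "j \<in> I" using \<open>BB \<in> Z\<close> by (rule imageE)
    note ij = i(2) j(2) i(1) j(1)
    have e: "AA \<otimes>\<^bsub>Qm\<^esub> BB = prj (i \<otimes> j)" using ij pi_mult[OF I_c[OF ij(1)] I_c[OF ij(2)]] by simp
    have "i \<otimes> j \<in> I" using I_iff[OF I_c[OF ij(1)] I_c[OF ij(2)]] ij by simp
    thus "AA \<otimes>\<^bsub>Qm\<^esub> BB \<in> Z" by (rule rev_image_eqI) (rule e)
  qed
qed

lemma Z_iso: "prj \<in> iso (P\<lparr>carrier := I\<rparr>) (Qm\<lparr>carrier := Z\<rparr>)"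
  unfolding iso_def
proof (intro CollectI conjI)
  show "prj \<in> hom (P\<lparr>carrier := I\<rparr>) (Qm\<lparr>carrier := Z\<rparr>)"
    by (rule homI) (auto simp: pi_mult I_c)
  have "inj_on prj I"
  proof (rule inj_onI)
    fix i j assume ij: "i \<in> I" "j \<in> I" "prj i = prj j"
    hence r: "(i,j) \<in> R0" using pi_eq I_c by simp
    obtain p u v where 1: "p \<in> carrier P" "u \<in> S" "v \<in> S" "val u = val v" "i = p \<otimes> u" "j = p \<otimes> v"
      using r by (rule R0E)
    have "u \<in> I" "v \<in> I" using I_iff 1 S_c ij by auto
    hence "u = v" using I_S 1 by metis
    thus "i = j" using 1 by simp
  qed
  thus "bij_betw prj (carrier (P\<lparr>carrier := I\<rparr>)) (carrier (Qm\<lparr>carrier := Z\<rparr>))"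
    by (simp add: bij_betw_def)
qed

abbreviation "E1 \<equiv> ideal_rel P S"
abbreviation "E2 \<equiv> ideal_rel Qm Z"

lemma S_closed: "S \<subseteq> carrier P" "\<one> \<in> S" "\<And>a b. a \<in> S \<Longrightarrow> b \<in> S \<Longrightarrow> a \<otimes> b \<in> S"
  using S_c S_one S_mult by auto

lemma E1_monc: "mon_congruence P E1"
  using ideal_rel_monc[OF comm_monoid_axioms S_closed] by simp

lemma E2_monc: "mon_congruence Qm E2"
proof (rule ideal_rel_monc[OF Q_cm])
  show "Z \<subseteq> carrier Qm" using pi_c I_c by blast
  show "\<one>\<^bsub>Qm\<^esub> \<in> Z" using Q_one one_I by blast
  fix a b assume "a \<in> Z" "b \<in> Z"
  thus "a \<otimes>\<^bsub>Qm\<^esub> b \<in> Z" using pi_mult I_c I_iff by auto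
qed

lemma prj_eqI: "(x,y) \<in> R0 \<Longrightarrow> prj x = prj y"
  using pi_eq R0_c by blast

lemma prj_eqD: "x \<in> carrier P \<Longrightarrow> y \<in> carrier P \<Longrightarrow> prj x = prj y \<Longrightarrow> (x,y) \<in> R0"
  using pi_eq by blast

lemma prj_Z: "i \<in> I \<Longrightarrow> prj i \<in> Z"
  by (rule imageI)

lemma key:
  assumes x: "x \<in> carrier P" and y: "y \<in> carrier P"
  shows "(x,y) \<in> E1 \<longleftrightarrow> (prj x, prj y) \<in> E2"
proof
  assume "(x,y) \<in> E1"
  then obtain u v where h: "u \<in> S" "v \<in> S" "x \<otimes> u = y \<otimes> v" by (rule ideal_relE)
  have u1: "val u \<in> S \<and> val (val u) = val u" by (rule I_S[OF val_I[OF h(1)]])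
  have v1: "val v \<in> S \<and> val (val v) = val v" by (rule I_S[OF val_I[OF h(2)]])
  have r1: "(x \<otimes> u, x \<otimes> val u) \<in> R0" using R0I[OF x h(1)] u1 by simp
  have r2: "(y \<otimes> v, y \<otimes> val v) \<in> R0" using R0I[OF y h(2)] v1 by simp
  have "prj x \<otimes>\<^bsub>Qm\<^esub> prj (val u) = prj (x \<otimes> val u)" by (rule pi_mult[OF x val_c[OF h(1)]])
  also have "\<dots> = prj (x \<otimes> u)" by (rule prj_eqI[OF R0_sym[OF r1]])
  also have "\<dots> = prj (y \<otimes> v)" using h(3) by simp
  also have "\<dots> = prj (y \<otimes> val v)" by (rule prj_eqI[OF r2])
  also have "\<dots> = prj y \<otimes>\<^bsub>Qm\<^esub> prj (val v)" by (rule pi_mult[OF y val_c[OF h(2)], symmetric])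
  finally have eq: "prj x \<otimes>\<^bsub>Qm\<^esub> prj (val u) = prj y \<otimes>\<^bsub>Qm\<^esub> prj (val v)" .
  show "(prj x, prj y) \<in> E2"
    by (rule ideal_relI[OF pi_c[OF x] pi_c[OF y] prj_Z[OF val_I[OF h(1)]] prj_Z[OF val_I[OF h(2)]] eq])
next
  assume "(prj x, prj y) \<in> E2"
  then obtain A B where h: "A \<in> Z" "B \<in> Z" "prj x \<otimes>\<^bsub>Qm\<^esub> A = prj y \<otimes>\<^bsub>Qm\<^esub> B"
    by (rule ideal_relE)
  obtain i where i: "A = prj i" "i \<in> I" using h(1) by (rule imageE)
  obtain j where j: "B = prj j" "j \<in> I" using h(2) by (rule imageE)
  have "prj (x \<otimes> i) = prj x \<otimes>\<^bsub>Qm\<^esub> prj i" by (rule pi_mult[OF x I_c[OF i(2)], symmetric])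
  also have "\<dots> = prj y \<otimes>\<^bsub>Qm\<^esub> prj j" using h(3) i(1) j(1) by simp
  also have "\<dots> = prj (y \<otimes> j)" by (rule pi_mult[OF y I_c[OF j(2)]])
  finally have "(x \<otimes> i, y \<otimes> j) \<in> R0" by (rule prj_eqD[OF m_closed[OF x I_c[OF i(2)]] m_closed[OF y I_c[OF j(2)]]])
  then obtain p u v where 1: "p \<in> carrier P" "u \<in> S" "v \<in> S" "val u = val v" "x \<otimes> i = p \<otimes> u" "y \<otimes> j = p \<otimes> v"
    by (rule R0E)
  have c: "i \<in> carrier P" "j \<in> carrier P" "u \<in> carrier P" "v \<in> carrier P"
    using I_c[OF i(2)] I_c[OF j(2)] S_c[OF 1(2)] S_c[OF 1(3)] by auto
  have "x \<otimes> (i \<otimes> v) = (x \<otimes> i) \<otimes> v" using x c by (simp add: m_assoc)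
  also have "\<dots> = (p \<otimes> u) \<otimes> v" using 1(5) by simp
  also have "\<dots> = (p \<otimes> v) \<otimes> u" using 1(1) c by (simp add: m_ac)
  also have "\<dots> = (y \<otimes> j) \<otimes> u" using 1(6) by simp
  also have "\<dots> = y \<otimes> (j \<otimes> u)" using y c by (simp add: m_assoc)
  finally have eq: "x \<otimes> (i \<otimes> v) = y \<otimes> (j \<otimes> u)" .
  have "i \<otimes> v \<in> S" "j \<otimes> u \<in> S"
    using S_mult[OF conjunct1[OF I_S[OF i(2)]] 1(3)] S_mult[OF conjunct1[OF I_S[OF j(2)]] 1(2)] by auto
  thus "(x,y) \<in> E1" using ideal_relI[OF x y _ _ eq] by blast
qed

definition psi where "psi C = E2 `` {prj (SOME x. x \<in> C)}"

lemma psi_class: "x \<in> carrier P \<Longrightarrow> psi (E1``{x}) = E2``{prj x}"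
proof -
  assume x: "x \<in> carrier P"
  have e1: "equiv (carrier P) E1" using E1_monc by (simp add: mon_congruence_def)
  have "x \<in> E1``{x}" by (rule equiv_class_self[OF e1 x])
  hence "(SOME y. y \<in> E1``{x}) \<in> E1``{x}" by (rule someI)
  hence r: "(x, SOME y. y \<in> E1``{x}) \<in> E1" by simp
  have c: "(SOME y. y \<in> E1``{x}) \<in> carrier P" using monc_c[OF E1_monc r] by simp
  have "(prj (SOME y. y \<in> E1``{x}), prj x) \<in> E2" using key[OF c x] monc_sym[OF E1_monc r] by simp
  hence "E2``{prj (SOME y. y \<in> E1``{x})} = E2``{prj x}"
    by (rule quot_class_eq[OF E2_monc pi_c[OF c] pi_c[OF x], THEN iffD2])
  thus ?thesis unfolding psi_def .
qed

lemma psi_iso: "psi \<in> iso (ideal_quot P S) (ideal_quot Qm Z)"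
  unfolding iso_def ideal_quot_def
proof (intro CollectI conjI)
  show "psi \<in> hom (quot_monoid P E1) (quot_monoid Qm E2)"
  proof (rule homI)
    fix C assume "C \<in> carrier (quot_monoid P E1)"
    then obtain x where x: "x \<in> carrier P" "C = E1``{x}" by (rule quot_cases)
    show "psi C \<in> carrier (quot_monoid Qm E2)"
      unfolding x(2) psi_class[OF x(1)] by (rule quot_classI[OF pi_c[OF x(1)]])
  next
    fix C D assume C: "C \<in> carrier (quot_monoid P E1)" and D: "D \<in> carrier (quot_monoid P E1)"
    obtain x where x: "x \<in> carrier P" "C = E1``{x}" using C by (rule quot_cases)
    obtain y where y: "y \<in> carrier P" "D = E1``{y}" using D by (rule quot_cases)
    have "psi (C \<otimes>\<^bsub>quot_monoid P E1\<^esub> D) = psi (E1``{x \<otimes> y})"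
      unfolding x(2) y(2) quot_mult_class[OF comm_monoid_axioms E1_monc x(1) y(1)] ..
    also have "\<dots> = E2``{prj (x \<otimes> y)}" by (rule psi_class[OF m_closed[OF x(1) y(1)]])
    also have "\<dots> = E2``{prj x \<otimes>\<^bsub>Qm\<^esub> prj y}" unfolding pi_mult[OF x(1) y(1)] ..
    also have "\<dots> = E2``{prj x} \<otimes>\<^bsub>quot_monoid Qm E2\<^esub> E2``{prj y}"
      by (rule quot_mult_class[OF Q_cm E2_monc pi_c[OF x(1)] pi_c[OF y(1)], symmetric])
    also have "\<dots> = psi C \<otimes>\<^bsub>quot_monoid Qm E2\<^esub> psi D"
      unfolding x(2) y(2) psi_class[OF x(1)] psi_class[OF y(1)] ..
    finally show "psi (C \<otimes>\<^bsub>quot_monoid P E1\<^esub> D) = psi C \<otimes>\<^bsub>quot_monoid Qm E2\<^esub> psi D" .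
  qed
  show "bij_betw psi (carrier (quot_monoid P E1)) (carrier (quot_monoid Qm E2))"
    unfolding bij_betw_def
  proof
    show "inj_on psi (carrier (quot_monoid P E1))"
    proof (rule inj_onI)
      fix C D assume C: "C \<in> carrier (quot_monoid P E1)" and D: "D \<in> carrier (quot_monoid P E1)"
        and e: "psi C = psi D"
      obtain x where x: "x \<in> carrier P" "C = E1``{x}" using C by (rule quot_cases)
      obtain y where y: "y \<in> carrier P" "D = E1``{y}" using D by (rule quot_cases)
      have "E2``{prj x} = E2``{prj y}" using e unfolding x(2) y(2) psi_class[OF x(1)] psi_class[OF y(1)] .
      hence "(prj x, prj y) \<in> E2" by (rule quot_class_eq[OF E2_monc pi_c[OF x(1)] pi_c[OF y(1)], THEN iffD1])
      hence "(x,y) \<in> E1" using key[OF x(1) y(1)] by simp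
      hence "E1``{x} = E1``{y}" by (rule quot_class_eq[OF E1_monc x(1) y(1), THEN iffD2])
      thus "C = D" unfolding x(2) y(2) .
    qed
    show "psi ` carrier (quot_monoid P E1) = carrier (quot_monoid Qm E2)"
    proof
      show "psi ` carrier (quot_monoid P E1) \<subseteq> carrier (quot_monoid Qm E2)"
      proof (rule image_subsetI)
        fix C assume "C \<in> carrier (quot_monoid P E1)"
        then obtain x where x: "x \<in> carrier P" "C = E1``{x}" by (rule quot_cases)
        show "psi C \<in> carrier (quot_monoid Qm E2)"
          unfolding x(2) psi_class[OF x(1)] by (rule quot_classI[OF pi_c[OF x(1)]])
      qed
      show "carrier (quot_monoid Qm E2) \<subseteq> psi ` carrier (quot_monoid P E1)"
      proof (rule subsetI)
        fix B assume "B \<in> carrier (quot_monoid Qm E2)"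
        then obtain A where A: "A \<in> carrier Qm" "B = E2``{A}" by (rule quot_cases)
        obtain x where x: "x \<in> carrier P" "A = prj x" using A(1) by (rule Q_cases)
        have "B = psi (E1``{x})" unfolding A(2) x(2) psi_class[OF x(1)] ..
        thus "B \<in> psi ` carrier (quot_monoid P E1)" by (rule image_eqI[OF _ quot_classI[OF x(1)]])
      qed
    qed
  qed
qed

end

context crown begin

lemma univ:
  fixes R :: "('r,'z) monoid_scheme"
  assumes g: "g \<in> hom P R" and gi: "\<forall>x\<in>I. g x = g (\<phi> x)"
  shows "\<exists>h\<in>hom Qm R. (\<forall>x\<in>carrier P. h (prj x) = g x) \<and>
     (\<forall>h'\<in>hom Qm R. (\<forall>x\<in>carrier P. h' (prj x) = g x) \<longrightarrow> (\<forall>y\<in>carrier Qm. h' y = h y))"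
proof -
  define K where "K = {(x,y). x \<in> carrier P \<and> y \<in> carrier P \<and> g x = g y}"
  have gm: "\<And>x y. x \<in> carrier P \<Longrightarrow> y \<in> carrier P \<Longrightarrow> g (x \<otimes> y) = g x \<otimes>\<^bsub>R\<^esub> g y"
    using g unfolding hom_def by blast
  have Km: "mon_congruence P K"
    unfolding mon_congruence_def
  proof (intro conjI)
    show "equiv (carrier P) K"
      by (rule equivI) (auto simp: K_def refl_on_def sym_def trans_def)
    show "\<forall>(a,b)\<in>K. \<forall>c\<in>carrier P. (a \<otimes> c, b \<otimes> c) \<in> K \<and> (c \<otimes> a, c \<otimes> b) \<in> K"
      by (auto simp: K_def gm)
  qed
  have "Gens \<subseteq> K"
  proof clarify
    fix a b assume "(a,b) \<in> Gens"
    then obtain x i where h: "x \<in> carrier P" "i \<in> I" "a = x \<otimes> i" "b = x \<otimes> \<phi> i" unfolding Gens_def by blast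
    have "g a = g b" using h gm gi I_c I'_c phi_in by simp
    thus "(a,b) \<in> K" using h I_c I'_c phi_in unfolding K_def by auto
  qed
  hence RK: "R0 \<subseteq> K" using R0_least Km by blast
  define h where "h A = g (SOME x. x \<in> A)" for A
  have hp: "h (prj x) = g x" if x: "x \<in> carrier P" for x
  proof -
    have "x \<in> prj x" using R0_refl x by simp
    hence "(SOME y. y \<in> prj x) \<in> prj x" by (rule someI)
    hence "(x, SOME y. y \<in> prj x) \<in> K" using RK by auto
    thus ?thesis unfolding h_def K_def by simp
  qed
  have hh: "h \<in> hom Qm R"
  proof (rule homI)
    fix A assume "A \<in> carrier Qm"
    then obtain x where "x \<in> carrier P" "A = prj x" by (rule Q_cases)
    thus "h A \<in> carrier R" using hp g unfolding hom_def by auto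
  next
    fix A B assume "A \<in> carrier Qm" "B \<in> carrier Qm"
    then obtain x y where "x \<in> carrier P" "A = prj x" "y \<in> carrier P" "B = prj y" by (metis Q_cases)
    thus "h (A \<otimes>\<^bsub>Qm\<^esub> B) = h A \<otimes>\<^bsub>R\<^esub> h B" using hp pi_mult gm by simp
  qed
  show ?thesis
  proof (intro bexI[OF _ hh] conjI ballI impI)
    show "\<And>x. x \<in> carrier P \<Longrightarrow> h (prj x) = g x" by (rule hp)
    fix h' y assume "h' \<in> hom Qm R" "\<forall>x\<in>carrier P. h' (prj x) = g x" "y \<in> carrier Qm"
    thus "h' y = h y" using hp by (metis Q_cases)
  qed
qed

end

theorem mainTheorem9:
  fixes P :: "('a,'b) monoid_scheme" and I I' :: "'a set" and \<phi> :: "'a \<Rightarrow> 'a"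
  assumes "comm_monoid P" and "conical P" and "refinement_monoid P"
    and "order_ideal P I" and "order_ideal P I'" and "I \<inter> I' = {\<one>\<^bsub>P\<^esub>}"
    and "\<phi> \<in> iso (P\<lparr>carrier := I\<rparr>) (P\<lparr>carrier := I'\<rparr>)"
  shows "crowned_pushout TYPE('r) P I I' \<phi> (crown_quot P I \<phi>) (crown_proj P I \<phi>)
    \<and> comm_monoid (crown_quot P I \<phi>) \<and> conical (crown_quot P I \<phi>)
    \<and> refinement_monoid (crown_quot P I \<phi>)
    \<and> (\<exists>Z. order_ideal (crown_quot P I \<phi>) Z
          \<and> P\<lparr>carrier := I\<rparr> \<cong> (crown_quot P I \<phi>)\<lparr>carrier := Z\<rparr>
          \<and> (\<exists>\<psi>\<in>iso (ideal_quot P (set_sum P I I')) (ideal_quot (crown_quot P I \<phi>) Z).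
               \<forall>x\<in>carrier P. \<psi> (ideal_rel P (set_sum P I I') `` {x})
                   = ideal_rel (crown_quot P I \<phi>) Z `` {crown_proj P I \<phi> x}))"
proof -
  have "crown P I I' \<phi>" unfolding crown_def crown_axioms_def using assms by blast
  then interpret crown P I I' \<phi> .
  have Qeq: "crown_quot P I \<phi> = Qm" unfolding crown_quot_def crown_rel_eq ..
  have peq: "crown_proj P I \<phi> = (\<lambda>x. prj x)" unfolding crown_proj_def crown_rel_eq ..
  have seq: "set_sum P I I' = S" unfolding set_sum_def S_def ..
  have cp: "crowned_pushout TYPE('r) P I I' \<phi> Qm (\<lambda>x. prj x)"
    unfolding crowned_pushout_def
  proof (intro conjI allI impI ballI)
    show "\<phi> ` I \<subseteq> I'" using phi_in by blast
    show "comm_monoid Qm" by (rule Q_cm)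
    show "(\<lambda>x. prj x) \<in> hom P Qm" by (rule quot_proj_hom[OF comm_monoid_axioms R0_monc])
    fix x assume x: "x \<in> I"
    have "(\<one>\<^bsub>P\<^esub> \<otimes>\<^bsub>P\<^esub> x, \<one>\<^bsub>P\<^esub> \<otimes>\<^bsub>P\<^esub> \<phi> x) \<in> Gens" unfolding Gens_def using x by blast
    hence "(x, \<phi> x) \<in> R0" using Gens_R0 x I_c I'_c phi_in by auto
    thus "prj x = prj (\<phi> x)" using pi_eq x I_c I'_c phi_in by simp
  next
    fix R :: "'r monoid" and g assume "comm_monoid R" "g \<in> hom P R" "\<forall>x\<in>I. g x = g (\<phi> x)"
    thus "\<exists>h\<in>hom Qm R. (\<forall>x\<in>carrier P. h (prj x) = g x) \<and>
        (\<forall>h'\<in>hom Qm R. (\<forall>x\<in>carrier P. h' (prj x) = g x) \<longrightarrow> (\<forall>y\<in>carrier Qm. h' y = h y))"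
      using univ by blast
  qed
  have z: "\<forall>x\<in>carrier P. psi (ideal_rel P S `` {x}) = ideal_rel Qm Z `` {prj x}"
    using psi_class by blast
  have "P\<lparr>carrier := I\<rparr> \<cong> Qm\<lparr>carrier := Z\<rparr>" using Z_iso by (rule is_isoI)
  thus ?thesis unfolding Qeq peq seq
    using cp Q_cm Q_conical Q_refinement Z_ideal psi_iso z by blast
qed

end
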